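(* Let $\gamma:[0,1]\to\mathbb{R}^2$ be a continuous curve such that $\gamma(0)=(0,0)$, $\gamma(1)=(1,1)$, and $1>\pi_1\circ\gamma(t)>\pi_2\circ\gamma(t)$ for all $t\in(0,1)$. Then for each $n\in\mathbb{N}$ there exist distinct points $A_1,\ldots,A_{n+1}$ on $\gamma$ such that, setting $A_0=(0,0)$, $A_{n+2}=(1,1)$ and $A_{-1}=A_{n+1}-(1,1)$, $$\pi_2(\overrightarrow{A_iA_{i+1}})=\pi_1(\overrightarrow{A_{i-1}A_i}),\qquad i=0,\ldots,n+1.$$
   Context: $\pi_1(a,b)=a$ and $\pi_2(a,b)=b$ are the coordinate projections; $\overrightarrow{AB}=B-A$. *)

theory Defs
  imports "HOL-Analysis.Analysis"
begin

end

theory Submission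
  imports Defs "HOL-Homology.Brouwer_Degree"
begin


lemma cm_snd_coord:
  "continuous_map (prod_topology (top_of_set {0..1::real}) (nsphere p)) euclideanreal (\<lambda>z. snd z j)"
  using continuous_map_compose[OF continuous_map_snd continuous_map_nsphere_projection]
  by (simp add: o_def)

lemma cm_fst01:
  "continuous_map (prod_topology (top_of_set {0..1::real}) (nsphere p)) euclideanreal (\<lambda>z. fst z)"
  using continuous_map_fst continuous_map_in_subtopology by blast

lemma cm_N:
  fixes p :: nat and w :: "real \<times> (nat \<Rightarrow> real) \<Rightarrow> nat \<Rightarrow> real"
  defines "X \<equiv> prod_topology (top_of_set {0..1::real}) (nsphere p)"
  assumes cw: "\<And>i. continuous_map X euclideanreal (\<lambda>z. w z i)"
    and nz: "\<And>z. z \<in> topspace X \<Longrightarrow> (\<Sum>i\<le>p. (w z i)^2) \<noteq> 0"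
  shows "continuous_map X (nsphere p)
           (\<lambda>z. (\<lambda>i. if i \<le> p then w z i / sqrt (\<Sum>j\<le>p. (w z j)^2) else 0))"
  unfolding nsphere continuous_map_in_subtopology
proof
  show "continuous_map X (powertop_real UNIV)
     (\<lambda>z i. if i \<le> p then w z i / sqrt (\<Sum>j\<le>p. (w z j)\<^sup>2) else 0)"
    unfolding continuous_map_componentwise_UNIV
  proof
    fix k
    show "continuous_map X euclideanreal
          (\<lambda>x. if k \<le> p then w x k / sqrt (\<Sum>j\<le>p. (w x j)\<^sup>2) else 0)"
    proof (cases "k \<le> p")
      case True
      then show ?thesis
        using nz by (simp, intro continuous_intros cw) auto
    qed simp
  qed
  show "(\<lambda>z i. if i \<le> p then w z i / sqrt (\<Sum>j\<le>p. (w z j)\<^sup>2) else 0) \<in> topspace X \<rightarrow>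
    {x. (\<Sum>i\<le>p. (x i)\<^sup>2) = 1 \<and> (\<forall>i>p. x i = 0)}"
  proof
    fix z assume z: "z \<in> topspace X"
    have pos: "(\<Sum>j\<le>p. (w z j)\<^sup>2) > 0"
      using nz[OF z] by (metis (no_types, lifting) order_less_le sum_nonneg zero_le_power2)
    have "(\<Sum>i\<le>p. (w z i / sqrt (\<Sum>j\<le>p. (w z j)\<^sup>2))\<^sup>2) = (\<Sum>i\<le>p. (w z i)\<^sup>2) / (\<Sum>j\<le>p. (w z j)\<^sup>2)"
      using pos by (simp add: power_divide flip: sum_divide_distrib)
    also have "\<dots> = 1" using pos by simp
    finally show "(\<lambda>i. if i \<le> p then w z i / sqrt (\<Sum>j\<le>p. (w z j)\<^sup>2) else 0)
        \<in> {x. (\<Sum>i\<le>p. (x i)\<^sup>2) = 1 \<and> (\<forall>i>p. x i = 0)}" by simp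
  qed
qed

lemma cm_psi:
  assumes cont: "continuous_map (powertop_real UNIV) euclideanreal \<phi>"
    and cf: "continuous_map (prod_topology (top_of_set {0..1::real}) (nsphere p)) euclideanreal c"
  shows "continuous_map (prod_topology (top_of_set {0..1::real}) (nsphere p)) euclideanreal
           (\<lambda>z. \<phi> (\<lambda>j. c z * snd z j))"
proof -
  have "continuous_map (prod_topology (top_of_set {0..1::real}) (nsphere p)) (powertop_real UNIV)
           (\<lambda>z j. c z * snd z j)"
    unfolding continuous_map_componentwise_UNIV
    by (intro allI continuous_intros cf cm_snd_coord)
  from continuous_map_compose[OF this cont] show ?thesis by (simp add: o_def)
qed

lemma no_zero_contra:
  fixes \<psi> :: "nat \<Rightarrow> (nat \<Rightarrow> real) \<Rightarrow> real" and p :: nat and R :: real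
  assumes cont: "\<And>i. continuous_map (powertop_real UNIV) euclideanreal (\<psi> i)"
    and R: "R > 0"
    and bd: "\<And>x t. (\<Sum>i\<le>p. (x i)^2) = R^2 \<Longrightarrow> 0 \<le> t \<Longrightarrow> t \<le> 1 \<Longrightarrow>
              (\<Sum>i\<le>p. (t * \<psi> i x + (1-t) * x i)^2) \<noteq> 0"
    and nz: "\<And>x. (\<Sum>i\<le>p. (x i)^2) \<le> R^2 \<Longrightarrow> (\<Sum>i\<le>p. (\<psi> i x)^2) \<noteq> 0"
  shows False
proof -
  define N where "N v = (\<lambda>i. if i \<le> p then v i / sqrt (\<Sum>j\<le>p. (v j)^2) else 0)" for v :: "nat \<Rightarrow> real"
  let ?X = "prod_topology (top_of_set {0..1::real}) (nsphere p)"
  have tsX: "topspace ?X = {0..1} \<times> {x. (\<Sum>i\<le>p. (x i)\<^sup>2) = 1 \<and> (\<forall>i>p. x i = 0)}"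
    by (simp add: nsphere)
  have sumR: "(\<Sum>i\<le>p. (c * x i)^2) = c^2 * (\<Sum>i\<le>p. (x i)^2)" for c :: real and x :: "nat \<Rightarrow> real"
    by (simp add: power_mult_distrib sum_distrib_left)
  define k1 where "k1 x = N (\<lambda>i. \<psi> i (\<lambda>j. R * x j))" for x
  define a where "a = N (\<lambda>i. \<psi> i (\<lambda>j. 0))"
  have h1: "homotopic_with (\<lambda>x. True) (nsphere p) (nsphere p) id k1"
  proof (subst homotopic_with, simp)
    let ?h = "\<lambda>z. N (\<lambda>i. fst z * \<psi> i (\<lambda>j. R * snd z j) + (1 - fst z) * (R * snd z i))"
    have "continuous_map ?X (nsphere p) ?h"
      unfolding N_def
    proof (rule cm_N)
      fix i
      show "continuous_map ?X euclideanreal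
          (\<lambda>z. fst z * \<psi> i (\<lambda>j. R * snd z j) + (1 - fst z) * (R * snd z i))"
        by (intro continuous_intros cm_fst01 cm_snd_coord cm_psi cont)
    next
      fix z assume z: "z \<in> topspace ?X"
      obtain t x where zz: "z = (t,x)" "0 \<le> t" "t \<le> 1" "(\<Sum>i\<le>p. (x i)\<^sup>2) = 1"
        using z unfolding tsX by auto
      have "(\<Sum>i\<le>p. ((\<lambda>j. R * x j) i)^2) = R^2" using sumR[of R x] zz by simp
      from bd[OF this zz(2,3)]
      show "(\<Sum>i\<le>p. (fst z * \<psi> i (\<lambda>j. R * snd z j) + (1 - fst z) * (R * snd z i))\<^sup>2) \<noteq> 0"
        using zz by simp
    qed
    moreover have "?h (0, x) = x" if "x \<in> topspace (nsphere p)" for x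
    proof -
      have x: "(\<Sum>i\<le>p. (x i)\<^sup>2) = 1" "\<forall>i>p. x i = 0" using that by (auto simp: nsphere)
      have "sqrt (\<Sum>j\<le>p. (R * x j)^2) = R" using sumR[of R x] x R by simp
      then show ?thesis using x R by (auto simp: N_def fun_eq_iff)
    qed
    moreover have "?h (1, x) = k1 x" for x by (simp add: k1_def)
    ultimately show "\<exists>h. continuous_map ?X (nsphere p) h \<and>
        (\<forall>x\<in>topspace (nsphere p). h (0, x) = id x) \<and> (\<forall>x\<in>topspace (nsphere p). h (1, x) = k1 x) \<and> (\<forall>t\<in>{0..1::real}. True)"
      by (intro exI[where x="?h"] conjI) auto
  qed
  have h2: "homotopic_with (\<lambda>x. True) (nsphere p) (nsphere p) k1 (\<lambda>x. a)"
  proof (subst homotopic_with, simp)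
    let ?h = "\<lambda>z. N (\<lambda>i. \<psi> i (\<lambda>j. (R - R * fst z) * snd z j))"
    have "continuous_map ?X (nsphere p) ?h"
      unfolding N_def
    proof (rule cm_N)
      fix i
      show "continuous_map ?X euclideanreal (\<lambda>z. \<psi> i (\<lambda>j. (R - R * fst z) * snd z j))"
        by (intro continuous_intros cm_fst01 cm_snd_coord cm_psi cont)
    next
      fix z assume z: "z \<in> topspace ?X"
      obtain t x where zz: "z = (t,x)" "0 \<le> t" "t \<le> 1" "(\<Sum>i\<le>p. (x i)\<^sup>2) = 1"
        using z unfolding tsX by auto
      have "(R - R * t)^2 \<le> R^2" using zz R
        by (intro power_mono) (auto simp: mult_le_cancel_left1)
      then have "(\<Sum>i\<le>p. ((\<lambda>j. (R - R * t) * x j) i)^2) \<le> R^2" using sumR[of "R - R*t" x] zz by simp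
      from nz[OF this]
      show "(\<Sum>i\<le>p. (\<psi> i (\<lambda>j. (R - R * fst z) * snd z j))\<^sup>2) \<noteq> 0"
        using zz by simp
    qed
    moreover have "?h (0, x) = k1 x" for x by (simp add: k1_def)
    moreover have "?h (1, x) = a" for x by (simp add: a_def)
    ultimately show "\<exists>h. continuous_map ?X (nsphere p) h \<and>
        (\<forall>x\<in>topspace (nsphere p). h (0, x) = k1 x) \<and> (\<forall>x\<in>topspace (nsphere p). h (1, x) = a) \<and> (\<forall>t\<in>{0..1::real}. True)"
      by (intro exI[where x="?h"] conjI) auto
  qed
  have "contractible_space (nsphere p)"
    unfolding contractible_space_def using homotopic_with_trans[OF h1 h2] by blast
  then show False using non_contractible_space_nsphere by blast
qed

lemma exists_zero:
  fixes \<psi> :: "nat \<Rightarrow> (nat \<Rightarrow> real) \<Rightarrow> real" and p :: nat and R :: real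
  assumes cont: "\<And>i. continuous_map (powertop_real UNIV) euclideanreal (\<psi> i)"
    and R: "R > 0"
    and bd: "\<And>x t. (\<Sum>i\<le>p. (x i)^2) = R^2 \<Longrightarrow> 0 \<le> t \<Longrightarrow> t \<le> 1 \<Longrightarrow>
              (\<Sum>i\<le>p. (t * \<psi> i x + (1-t) * x i)^2) \<noteq> 0"
  shows "\<exists>x. \<forall>i\<le>p. \<psi> i x = 0"
proof (rule ccontr)
  assume H: "\<nexists>x. \<forall>i\<le>p. \<psi> i x = 0"
  have "(\<Sum>i\<le>p. (\<psi> i x)^2) \<noteq> 0" for x
  proof
    assume "(\<Sum>i\<le>p. (\<psi> i x)^2) = 0"
    then have "\<forall>i\<le>p. \<psi> i x = 0" by (simp add: sum_nonneg_eq_0_iff)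
    with H show False by blast
  qed
  then show False using no_zero_contra[OF cont R bd] by blast
qed

lemma cm_comp_coord:
  assumes "continuous_on UNIV h"
  shows "continuous_map (powertop_real UNIV) euclideanreal (\<lambda>x. h (x k))"
proof -
  have "continuous_map (powertop_real UNIV) euclideanreal (\<lambda>x. x k)"
    by (metis UNIV_I continuous_map_product_projection)
  from continuous_map_compose[OF this, of euclideanreal h] assms show ?thesis by (simp add: o_def)
qed



lemma chain:
  fixes \<gamma> :: "real \<Rightarrow> real \<times> real" and n :: nat and T :: "nat \<Rightarrow> real"
  assumes g0: "\<gamma> 0 = (0,0)" and g1: "\<gamma> 1 = (1,1)"
    and gi: "\<forall>t\<in>{0<..<1}. 1 > fst (\<gamma> t) \<and> fst (\<gamma> t) > snd (\<gamma> t)"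
    and T01: "\<And>j. T j \<in> {0..1}"
    and E0: "T 0 + max (fst (\<gamma> (T (n+1)))) 0 - 1 = 0"
    and E1: "snd (\<gamma> (T 1)) - T 0 = 0"
    and Ek: "\<And>k. 2 \<le> k \<Longrightarrow> k \<le> n+1 \<Longrightarrow>
        snd (\<gamma> (T k)) - max (- T 0) (min (1 - T 0) (fst (\<gamma> (T (k-1))))) - T 0 = 0"
  shows "\<exists>A :: int \<Rightarrow> real \<times> real.
           inj_on A {1..int n + 1} \<and>
           A ` {1..int n + 1} \<subseteq> \<gamma> ` {0..1} \<and>
           A 0 = (0, 0) \<and> A (int n + 2) = (1, 1) \<and>
           A (-1) = A (int n + 1) - (1, 1) \<and>
           (\<forall>i\<in>{0..int n + 1}. snd (A (i + 1) - A i) = fst (A i - A (i - 1)))"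
proof -
  define F where "F j = fst (\<gamma> (T j))" for j
  define G where "G j = snd (\<gamma> (T j))" for j
  define c where "c = T 0"
  have P: "G j \<le> F j \<and> F j \<le> 1 \<and> (F j = 1 \<longrightarrow> T j = 1) \<and> (G j = 1 \<longrightarrow> T j = 1)" for j
  proof -
    have "T j = 0 \<or> T j = 1 \<or> T j \<in> {0<..<1}" using T01[of j] by auto
    then show ?thesis using gi g0 g1 unfolding F_def G_def by force
  qed
  have c01: "0 \<le> c" "c \<le> 1" using T01[of 0] by (auto simp: c_def)
  have G1: "G 1 = c" using E1 by (simp add: G_def c_def)
  have Gk: "G k = max (- c) (min (1 - c) (F (k-1))) + c" if "2 \<le> k" "k \<le> n+1" for k
    using Ek[OF that] by (simp add: G_def F_def c_def)
  have Gnn: "G j \<ge> 0" if "1 \<le> j" "j \<le> n+1" for j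
  proof (cases "j = 1")
    case True then show ?thesis using G1 c01 by simp
  next
    case False then show ?thesis using Gk[of j] that by simp
  qed
  have Fnn: "F j \<ge> 0" if "1 \<le> j" "j \<le> n+1" for j using Gnn[OF that] P[of j] by linarith
  have cF: "c = 1 - F (n+1)" using E0 Fnn[of "n+1"] by (simp add: F_def c_def)
  have Fle: "F (k-1) \<le> 1 - c" if k: "2 \<le> k" "k \<le> n+1" for k
  proof (rule ccontr)
    assume A: "\<not> F (k-1) \<le> 1 - c"
    have "T k = 1" using Gk[OF k] A c01 P[of k] by auto
    have up: "T (k+d) = 1" if "k + d \<le> n+1" for d
      using that
    proof (induction d)
      case 0 then show ?case using \<open>T k = 1\<close> by simp
    next
      case (Suc d)
      then have "T (k+d) = 1" by simp
      then have "F (k+d) = 1" using g1 by (simp add: F_def)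
      then have "G (Suc (k+d)) = 1" using Gk[of "Suc (k+d)"] Suc.prems k c01 by simp
      then show ?case using P[of "Suc (k+d)"] by simp
    qed
    from up[of "n+1-k"] k have "T (n+1) = 1" by simp
    then have "c = 0" using cF g1 by (simp add: F_def)
    then show False using A P[of "k-1"] by simp
  qed
  define X where "X j = (if j = 0 then 0 else F j)" for j
  have GX: "G j = X (j-1) + c" if "1 \<le> j" "j \<le> n+1" for j
  proof (cases "j = 1")
    case True then show ?thesis using G1 by (simp add: X_def)
  next
    case False
    then have "2 \<le> j" using that by simp
    moreover have "F (j-1) \<ge> 0" using Fnn[of "j-1"] \<open>2 \<le> j\<close> that by simp
    ultimately show ?thesis using Gk[of j] Fle[of j] that c01 by (simp add: X_def)
  qed
  have Xend: "X (n+1) + c = 1" using cF by (simp add: X_def)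
  have cpos: "c > 0"
  proof (rule ccontr)
    assume "\<not> c > 0"
    then have c0: "c = 0" using c01 by simp
    have down: "T (n+1-d) = 1" if "d \<le> n" for d
      using that
    proof (induction d)
      case 0 then show ?case using Xend c0 P[of "n+1"] by (simp add: X_def)
    next
      case (Suc d)
      then have "T (n+1-d) = 1" by simp
      then have "G (n+1-d) = 1" using g1 by (simp add: G_def)
      then have "X (n - d) = 1" using GX[of "n+1-d"] c0 Suc.prems by simp
      then have "F (n - d) = 1" using Suc.prems by (simp add: X_def split: if_splits)
      then show ?case using P[of "n-d"] Suc.prems by (simp add: Suc_diff_le)
    qed
    from down[of n] have "T 1 = 1" by simp
    then have "G 1 = 1" using g1 by (simp add: G_def)
    then show False using G1 c0 by simp
  qed
  have Ginc: "G i < G (i + Suc d)" if "1 \<le> i" "i + Suc d \<le> n+1" for i d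
    using that
  proof (induction d)
    case 0
    have "G (Suc i) = X i + c" using GX[of "Suc i"] 0 by simp
    then show ?case using P[of i] cpos 0 by (simp add: X_def)
  next
    case (Suc d)
    have "G (i + Suc (Suc d)) = X (i + Suc d) + c" using GX[of "i + Suc (Suc d)"] Suc.prems by simp
    moreover have "X (i + Suc d) \<ge> G (i + Suc d)" using P[of "i + Suc d"] by (simp add: X_def)
    ultimately show ?case using Suc cpos by simp
  qed
  define A where "A k = (if k = -1 then \<gamma> (T (n+1)) - (1,1) else if k = 0 then (0,0)
      else if k = int n + 2 then (1,1) else \<gamma> (T (nat k)))" for k :: int
  have Aj: "A (int j) = \<gamma> (T j)" if "1 \<le> j" "j \<le> n+1" for j
    using that by (auto simp: A_def)
  have fstA: "fst (A (int j)) = X j" if "j \<le> n+1" for j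
    using that Aj[of j] by (cases "j = 0") (auto simp: A_def X_def F_def)
  have sndA: "snd (A (int j)) = X (j-1) + c" if "1 \<le> j" "j \<le> n+2" for j
  proof (cases "j = n+2")
    case True then show ?thesis using Xend by (simp add: A_def)
  next
    case False then show ?thesis using that Aj[of j] GX[of j] by (simp add: G_def)
  qed
  have Glt: "G i < G j" if "1 \<le> i" "i < j" "j \<le> n+1" for i j
  proof -
    have "j = i + Suc (j - i - 1)" using that by simp
    then show ?thesis using Ginc[of i "j - i - 1"] that by (metis)
  qed
  have inj: "inj_on A {1..int n + 1}"
  proof (rule inj_onI)
    fix a b assume a: "a \<in> {1..int n + 1}" and b: "b \<in> {1..int n + 1}" and e: "A a = A b"
    obtain i j where ij: "a = int i" "b = int j" "1 \<le> i" "i \<le> n+1" "1 \<le> j" "j \<le> n+1"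
    proof -
      show thesis using a b by (intro that[of "nat a" "nat b"]) auto
    qed
    have "G i = G j" using e ij Aj[of i] Aj[of j] by (simp add: G_def)
    moreover have "i \<noteq> j \<Longrightarrow> G i \<noteq> G j"
    proof -
      assume "i \<noteq> j"
      then consider "i < j" | "j < i" by linarith
      then show "G i \<noteq> G j"
      proof cases
        case 1 then show ?thesis using Glt[of i j] ij by fastforce
      next
        case 2 then show ?thesis using Glt[of j i] ij by fastforce
      qed
    qed
    ultimately show "a = b" using ij by auto
  qed
  have img: "A ` {1..int n + 1} \<subseteq> \<gamma> ` {0..1}"
  proof
    fix y assume "y \<in> A ` {1..int n + 1}"
    then obtain k where k: "k \<in> {1..int n + 1}" "y = A k" by blast
    then obtain j where "k = int j" "1 \<le> j" "j \<le> n+1"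
    proof -
      show thesis using k by (intro that[of "nat k"]) auto
    qed
    then show "y \<in> \<gamma> ` {0..1}" using k Aj[of j] T01[of j] by auto
  qed
  have cond: "snd (A (i + 1) - A i) = fst (A i - A (i - 1))" if "i \<in> {0..int n + 1}" for i
  proof -
    define j where "j = nat i"
    have j: "i = int j" "j \<le> n+1" using that by (auto simp: j_def)
    show ?thesis
    proof (cases "j = 0")
      case True
      have "snd (A 1) = c" using sndA[of 1] by (simp add: X_def)
      moreover have "fst (A (-1)) = X (n+1) - 1" using Aj[of "n+1"] by (simp add: A_def X_def F_def)
      ultimately show ?thesis using j True Xend by (simp add: A_def)
    next
      case False
      have s1: "snd (A (int (Suc j))) = X j + c" using sndA[of "Suc j"] j by simp
      have s2: "snd (A (int j)) = X (j-1) + c" using sndA[of j] j False by simp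
      have f1: "fst (A (int j)) = X j" using fstA[of j] j by simp
      have f2: "fst (A (int (j-1))) = X (j-1)" using fstA[of "j-1"] j by simp
      have e1: "int j + 1 = int (Suc j)" "int j - 1 = int (j-1)" using j False by auto
      have "snd (A (i + 1) - A i) = snd (A (int (Suc j))) - snd (A (int j))"
        by (simp only: j(1) e1 snd_diff)
      moreover have "fst (A i - A (i - 1)) = fst (A (int j)) - fst (A (int (j-1)))"
        by (simp only: j(1) e1 fst_diff)
      ultimately show ?thesis using s1 s2 f1 f2 by linarith
    qed
  qed
  have "A (-1) = A (int n + 1) - (1,1)" using Aj[of "n+1"] by (simp add: A_def add.commute)
  moreover have "A 0 = (0,0)" "A (int n + 2) = (1,1)" by (auto simp: A_def)
  ultimately show ?thesis using inj img cond by blast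
qed


theorem corollary2:
  fixes \<gamma> :: "real \<Rightarrow> real \<times> real" and n :: nat
  assumes "continuous_on {0..1} \<gamma>"
    and "\<gamma> 0 = (0, 0)" and "\<gamma> 1 = (1, 1)"
    and "\<forall>t\<in>{0<..<1}. 1 > fst (\<gamma> t) \<and> fst (\<gamma> t) > snd (\<gamma> t)"
  shows "\<exists>A :: int \<Rightarrow> real \<times> real.
           inj_on A {1..int n + 1} \<and>
           A ` {1..int n + 1} \<subseteq> \<gamma> ` {0..1} \<and>
           A 0 = (0, 0) \<and> A (int n + 2) = (1, 1) \<and>
           A (-1) = A (int n + 1) - (1, 1) \<and>
           (\<forall>i\<in>{0..int n + 1}. snd (A (i + 1) - A i) = fst (A i - A (i - 1)))"
proof -
  note gc = assms(1) and g0 = assms(2) and g1 = assms(3) and gi = assms(4)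
  define cl where "cl a = max 0 (min 1 a)" for a :: real
  define F where "F a = fst (\<gamma> (cl a))" for a
  define G where "G a = snd (\<gamma> (cl a))" for a
  define p where "p = n + 1"
  define u where "u x i = cl (x i + 1/2)" for x :: "nat \<Rightarrow> real" and i
  define \<Phi> where "\<Phi> x i = (if i = 0 then u x 0 + max (F (u x (n+1))) 0 - 1
         else if i = 1 then G (u x 1) - u x 0
         else G (u x i) - max (- u x 0) (min (1 - u x 0) (F (u x (i-1)))) - u x 0)" for x i
  define \<psi> where "\<psi> i x = \<Phi> x i + (x i + 1/2 - u x i)" for i x
  have cl01: "cl a \<in> {0..1}" for a by (simp add: cl_def)
  have clid: "a \<in> {0..1} \<Longrightarrow> cl a = a" for a by (auto simp: cl_def)
  have clc: "continuous_on UNIV cl" unfolding cl_def by (intro continuous_intros)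
  have gcl: "continuous_on UNIV (\<lambda>a. \<gamma> (cl a))"
    by (rule continuous_on_compose2[OF gc clc]) (auto simp: cl_def)
  have ucc: "continuous_on UNIV (\<lambda>a. cl (a + 1/2))"
    unfolding cl_def by (intro continuous_intros)
  have Fc: "continuous_on UNIV (\<lambda>a. F (cl (a + 1/2)))"
  proof -
    have "continuous_on UNIV (\<lambda>a. fst (\<gamma> (cl (cl (a + 1/2)))))"
      by (intro continuous_intros continuous_on_compose2[OF gcl ucc]) auto
    then show ?thesis by (simp add: F_def)
  qed
  have Gc: "continuous_on UNIV (\<lambda>a. G (cl (a + 1/2)))"
  proof -
    have "continuous_on UNIV (\<lambda>a. snd (\<gamma> (cl (cl (a + 1/2)))))"
      by (intro continuous_intros continuous_on_compose2[OF gcl ucc]) auto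
    then show ?thesis by (simp add: G_def)
  qed
  have cmF: "continuous_map (powertop_real UNIV) euclideanreal (\<lambda>x. F (u x k))" for k
    using cm_comp_coord[OF Fc, of k] by (simp add: u_def)
  have cmG: "continuous_map (powertop_real UNIV) euclideanreal (\<lambda>x. G (u x k))" for k
    using cm_comp_coord[OF Gc, of k] by (simp add: u_def)
  have cmu: "continuous_map (powertop_real UNIV) euclideanreal (\<lambda>x. u x k)" for k
    using cm_comp_coord[OF ucc, of k] by (simp add: u_def)
  have cmx: "continuous_map (powertop_real UNIV) euclideanreal (\<lambda>x. x k)" for k
    by (metis UNIV_I continuous_map_product_projection)
  have cont: "continuous_map (powertop_real UNIV) euclideanreal (\<psi> i)" for i
  proof -
    have "continuous_map (powertop_real UNIV) euclideanreal (\<lambda>x. \<Phi> x i + (x i + 1/2 - u x i))"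
      unfolding \<Phi>_def
      by (cases "i = 0"; cases "i = 1") (simp_all, (intro continuous_intros cmF cmG cmu cmx)+)
    then show ?thesis by (simp add: \<psi>_def[abs_def])
  qed
  have P: "G a \<le> F a \<and> F a \<le> 1" for a
  proof -
    have "cl a = 0 \<or> cl a = 1 \<or> cl a \<in> {0<..<1}" using cl01[of a] by auto
    then show ?thesis using gi g0 g1 unfolding F_def G_def by force
  qed
  have G0: "G 0 = 0" and G1: "G 1 = 1" using g0 g1 by (auto simp: G_def cl_def)
  have u01: "u x k \<in> {0..1}" for x k unfolding u_def by (rule cl01)
  have face1: "\<Phi> x i \<ge> 0" if "u x i = 1" "i \<le> p" for x i
  proof -
    have c: "0 \<le> u x 0" "u x 0 \<le> 1" using u01[of x 0] by auto
    show ?thesis using that c G1 by (auto simp: \<Phi>_def)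
  qed
  have face0: "\<Phi> x i \<le> 0" if "u x i = 0" "i \<le> p" for x i
  proof -
    have c: "0 \<le> u x 0" "u x 0 \<le> 1" using u01[of x 0] by auto
    show ?thesis using that c G0 P[of "u x (n+1)"] by (auto simp: \<Phi>_def)
  qed
  have sgnp: "\<psi> i x > 0" if "x i > 1/2" "i \<le> p" for x i
  proof -
    have "u x i = 1" using that by (simp add: u_def cl_def)
    then show ?thesis using face1[of x i] that by (simp add: \<psi>_def)
  qed
  have sgnn: "\<psi> i x < 0" if "x i < -1/2" "i \<le> p" for x i
  proof -
    have "u x i = 0" using that by (simp add: u_def cl_def)
    then show ?thesis using face0[of x i] that by (simp add: \<psi>_def)
  qed
  define R where "R = real p + 1"
  have R: "R > 0" by (simp add: R_def)
  have bd: "(\<Sum>i\<le>p. (t * \<psi> i x + (1-t) * x i)^2) \<noteq> 0"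
    if x: "(\<Sum>i\<le>p. (x i)^2) = R^2" and t: "0 \<le> t" "t \<le> 1" for x t
  proof -
    have "\<exists>i\<le>p. \<bar>x i\<bar> > 1/2"
    proof (rule ccontr)
      assume "\<not> (\<exists>i\<le>p. \<bar>x i\<bar> > 1/2)"
      then have "(x i)^2 \<le> 1/4" if "i \<le> p" for i
      proof -
        have "\<bar>x i\<bar> \<le> 1/2" using that \<open>\<not> _\<close> by auto
        then have "\<bar>x i\<bar>^2 \<le> (1/2)^2" by (intro power_mono) auto
        then show ?thesis by (simp add: power2_eq_square)
      qed
      then have "(\<Sum>i\<le>p. (x i)^2) \<le> (\<Sum>i\<le>p. 1/4)" by (intro sum_mono) auto
      also have "\<dots> = (real p + 1) / 4" by simp
      also have "\<dots> < R^2"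
      proof -
        have "(real p + 1) / 4 < (real p + 1) * 1" by simp
        also have "\<dots> \<le> (real p + 1) * (real p + 1)" by (rule mult_left_mono) auto
        finally have "(real p + 1) / 4 < (real p + 1) * (real p + 1)" .
        then show ?thesis by (simp add: R_def power2_eq_square)
      qed
      finally show False using x by simp
    qed
    then obtain i where i: "i \<le> p" "\<bar>x i\<bar> > 1/2" by blast
    have ne: "t * \<psi> i x + (1-t) * x i \<noteq> 0"
    proof (cases "x i > 1/2")
      case True
      then have "\<psi> i x > 0" using sgnp i by blast
      moreover have "t * \<psi> i x \<ge> 0" "(1-t) * x i \<ge> 0" using calculation True t by auto
      moreover have "t > 0 \<or> 1 - t > 0" by auto
      ultimately have "t * \<psi> i x + (1-t) * x i > 0"
        using True by (auto simp: add_pos_nonneg add_nonneg_pos)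
      then show ?thesis by simp
    next
      case False
      then have xn: "x i < -1/2" using i by auto
      then have "\<psi> i x < 0" using sgnn i by blast
      moreover have "t * \<psi> i x \<le> 0" "(1-t) * x i \<le> 0" using calculation xn t
        by (auto simp: mult_nonneg_nonpos)
      moreover have "t > 0 \<or> 1 - t > 0" by auto
      ultimately have "t * \<psi> i x + (1-t) * x i < 0"
        using xn by (auto simp: add_neg_nonpos add_nonpos_neg mult_pos_neg)
      then show ?thesis by simp
    qed
    have "0 < (t * \<psi> i x + (1-t) * x i)^2" using ne by simp
    also have "\<dots> \<le> (\<Sum>i\<le>p. (t * \<psi> i x + (1-t) * x i)^2)"
      using i by (intro member_le_sum) auto
    finally show ?thesis by simp
  qed
  obtain x where x0: "\<forall>i\<le>p. \<psi> i x = 0"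
    using exists_zero[OF cont R bd] by blast
  have \<Phi>0: "\<Phi> x i = 0" if "i \<le> p" for i
  proof -
    have "\<not> x i > 1/2" "\<not> x i < -1/2" using sgnp[OF _ that] sgnn[OF _ that] x0 that by force+
    then have "u x i = x i + 1/2" by (simp add: u_def cl_def)
    moreover have "\<psi> i x = 0" using x0 that by blast
    ultimately show ?thesis by (simp add: \<psi>_def)
  qed
  define T where "T = u x"
  have FT: "F (T j) = fst (\<gamma> (T j))" "G (T j) = snd (\<gamma> (T j))" for j
    using clid[OF u01[of x j]] by (simp_all add: F_def G_def T_def)
  show ?thesis
  proof (rule chain[OF g0 g1 gi])
    show "T j \<in> {0..1}" for j using u01 by (simp add: T_def)
    show "T 0 + max (fst (\<gamma> (T (n + 1)))) 0 - 1 = 0"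
      using \<Phi>0[of 0] by (simp add: \<Phi>_def FT T_def[symmetric] p_def)
    show "snd (\<gamma> (T 1)) - T 0 = 0"
      using \<Phi>0[of 1] by (simp add: \<Phi>_def FT T_def[symmetric] p_def)
    show "snd (\<gamma> (T k)) - max (- T 0) (min (1 - T 0) (fst (\<gamma> (T (k - 1))))) - T 0 = 0"
      if "2 \<le> k" "k \<le> n + 1" for k
      using \<Phi>0[of k] that by (simp add: \<Phi>_def FT T_def[symmetric] p_def)
  qed
qed

end
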